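(* Let $R$ be a commutative ring. The assignments $(M,C)\mapsto C^\sharp/C^\flat$ (with $T$ acting by $\theta_C$) and $X\mapsto(X,\mathrm{graph}(T_X))$, where $T_X\in\mathrm{End}_R(X)$ is $x\mapsto Tx$, extend to $R$-linear functors $\sharp/\flat\colon\mathrm{Rel}_R\to\mathrm{Mod}\,R[T,T^{-1}]$ (sending a morphism $f\colon(L,B)\to(M,C)$ to $\ell+B^\flat\mapsto f(\ell)+C^\flat$) and $\mathrm{graph}_T\colon\mathrm{Mod}\,R[T,T^{-1}]\to\mathrm{Rel}_R$ (sending $g$ to $g$). Moreover $(\sharp/\flat)\circ\mathrm{graph}_T$ is the identity functor on $\mathrm{Mod}\,R[T,T^{-1}]$.
   Context: An $R$-linear relation on an $R$-module $M$ is a submodule $C\subseteq M\oplus M$; $Cm=\{m':(m,m')\in C\}$, $CS=\bigcup_{m\in S}Cm$, $C^{-1}=\{(y,x):(x,y)\in C\}$, $\mathrm{graph}(f)=\{(x,f(x))\}$. $\mathrm{Rel}_R$ has objects pairs $(M,C)$ with $C$ a relation on $M$, and morphisms $(L,B)\to(M,C)$ the $R$-linear maps $f\colon L\to M$ with $(f(x),f(y))\in C$ for all $(x,y)\in B$. $C''$ is the set of $m\in M$ for which there exists $(m_n)_{n\in\mathbb{N}}$ in $M$ with $m_0=m$ and $m_{n+1}\in Cm_n$ for all $n$; $C'$ the set of those for which such a sequence exists with $m_n=0$ for $n\gg0$; $C^\sharp=C''\cap(C^{-1})''$, $C^\flat=C''\cap(C^{-1})'+(C^{-1})''\cap C'$.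 It is known that the rule $\theta_C(m+C^\flat)=m'+C^\flat$ if and only if $m'\in C^\sharp\cap(C^\flat+Cm)$ gives a well-defined $R$-module automorphism $\theta_C$ of $C^\sharp/C^\flat$; via $T\mapsto\theta_C$ this makes $C^\sharp/C^\flat$ an $R[T,T^{-1}]$-module. *)

theory Defs
  imports Complex_Main
begin

text \<open>R-modules are rendered type-wise: a commutative ring 'r :: comm_ring_1 and an
  R-module given by a scalar multiplication s :: 'r => 'm => 'm with module s
  (locale of HOL.Modules); the underlying module is the whole type 'm.\<close>

definition is_rel :: "('r::comm_ring_1 \<Rightarrow> 'm::ab_group_add \<Rightarrow> 'm) \<Rightarrow> ('m \<times> 'm) set \<Rightarrow> bool" where
  "is_rel s C \<longleftrightarrow> (0, 0) \<in> C \<and>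
     (\<forall>x y x' y'. (x, y) \<in> C \<and> (x', y') \<in> C \<longrightarrow> (x + x', y + y') \<in> C) \<and>
     (\<forall>r x y. (x, y) \<in> C \<longrightarrow> (s r x, s r y) \<in> C)"

definition rel_mor :: "('r::comm_ring_1 \<Rightarrow> 'l::ab_group_add \<Rightarrow> 'l) \<Rightarrow> ('r \<Rightarrow> 'm::ab_group_add \<Rightarrow> 'm)
    \<Rightarrow> ('l \<times> 'l) set \<Rightarrow> ('m \<times> 'm) set \<Rightarrow> ('l \<Rightarrow> 'm) \<Rightarrow> bool" where
  "rel_mor sL sM B C f \<longleftrightarrow> module_hom sL sM f \<and> (\<forall>x y. (x, y) \<in> B \<longrightarrow> (f x, f y) \<in> C)"

definition graph :: "('m \<Rightarrow> 'm) \<Rightarrow> ('m \<times> 'm) set" where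
  "graph f = {(x, f x) | x. True}"

definition set_plus :: "'m::ab_group_add set \<Rightarrow> 'm set \<Rightarrow> 'm set" where
  "set_plus A B = {a + b | a b. a \<in> A \<and> b \<in> B}"

definition dprime :: "('m::ab_group_add \<times> 'm) set \<Rightarrow> 'm set" where
  "dprime C = {m. \<exists>s::nat \<Rightarrow> 'm. s 0 = m \<and> (\<forall>n. s (Suc n) \<in> C `` {s n})}"

definition sprime :: "('m::ab_group_add \<times> 'm) set \<Rightarrow> 'm set" where
  "sprime C = {m. \<exists>s::nat \<Rightarrow> 'm. s 0 = m \<and> (\<forall>n. s (Suc n) \<in> C `` {s n}) \<and> (\<exists>N. \<forall>n\<ge>N. s n = 0)}"

definition sharp :: "('m::ab_group_add \<times> 'm) set \<Rightarrow> 'm set" where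
  "sharp C = dprime C \<inter> dprime (C\<inverse>)"

definition flat :: "('m::ab_group_add \<times> 'm) set \<Rightarrow> 'm set" where
  "flat C = set_plus (dprime C \<inter> sprime (C\<inverse>)) (dprime (C\<inverse>) \<inter> sprime C)"

definition coset :: "('m::ab_group_add \<times> 'm) set \<Rightarrow> 'm \<Rightarrow> 'm set" where
  "coset C m = (\<lambda>c. m + c) ` flat C"

definition quot :: "('m::ab_group_add \<times> 'm) set \<Rightarrow> 'm set set" where
  "quot C = coset C ` sharp C"

definition qadd :: "'m::ab_group_add set \<Rightarrow> 'm set \<Rightarrow> 'm set" where
  "qadd X Y = set_plus X Y"

definition qscale :: "('r \<Rightarrow> 'm::ab_group_add \<Rightarrow> 'm) \<Rightarrow> ('m \<times> 'm) set \<Rightarrow> 'r \<Rightarrow> 'm set \<Rightarrow> 'm set" where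
  "qscale s C r X = set_plus (s r ` X) (flat C)"

definition theta :: "('m::ab_group_add \<times> 'm) set \<Rightarrow> 'm set \<Rightarrow> 'm set" where
  "theta C X = (THE Y. \<exists>m m'. m \<in> sharp C \<and> X = coset C m \<and>
       m' \<in> sharp C \<inter> set_plus (flat C) (C `` {m}) \<and> Y = coset C m')"

definition qmap :: "('l::ab_group_add \<times> 'l) set \<Rightarrow> ('m::ab_group_add \<times> 'm) set \<Rightarrow> ('l \<Rightarrow> 'm) \<Rightarrow> 'l set \<Rightarrow> 'm set" where
  "qmap B C f X = coset C (f (SOME l. l \<in> sharp B \<and> X = coset B l))"

end

theory Submission
  imports Defs
begin

lemma graph_iff[simp]: "(x, y) \<in> graph T \<longleftrightarrow> y = T x"
  by (auto simp: graph_def)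

lemma set_plus_iff: "z \<in> set_plus A B \<longleftrightarrow> (\<exists>a\<in>A. \<exists>b\<in>B. z = a + b)"
  by (auto simp: set_plus_def)

lemma is_relD:
  assumes "is_rel s C"
  shows "(0,0) \<in> C" "(x, y) \<in> C \<Longrightarrow> (x', y') \<in> C \<Longrightarrow> (x + x', y + y') \<in> C"
    "(x, y) \<in> C \<Longrightarrow> (s r x, s r y) \<in> C"
  using assms unfolding is_rel_def by blast+

lemma is_rel_conv: "is_rel s C \<Longrightarrow> is_rel s (C\<inverse>)"
  unfolding is_rel_def by auto

lemma rel_neg:
  assumes "module s" "is_rel s C" "(x, y) \<in> C"
  shows "(-x, -y) \<in> C"
proof -
  have "(s (-1) x, s (-1) y) \<in> C" using is_relD(3)[OF assms(2) assms(3)] .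
  then show ?thesis using module.scale_minus_left[OF assms(1)] module.scale_one[OF assms(1)] by simp
qed

lemma rel_diff:
  assumes "module s" "is_rel s C" "(x, y) \<in> C" "(x', y') \<in> C"
  shows "(x - x', y - y') \<in> C"
  using is_relD(2)[OF assms(2) assms(3) rel_neg[OF assms(1,2,4)]] by simp

lemma dprime_step: "x \<in> dprime C \<longleftrightarrow> (\<exists>y. (x, y) \<in> C \<and> y \<in> dprime C)"
proof
  assume "x \<in> dprime C"
  then obtain s where s: "s 0 = x" "\<forall>n. s (Suc n) \<in> C `` {s n}" by (auto simp: dprime_def)
  have "s 1 \<in> dprime C" unfolding dprime_def using s by (auto intro!: exI[of _ "\<lambda>n. s (Suc n)"])
  moreover have "(x, s 1) \<in> C" using s by (metis Image_singleton_iff One_nat_def)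
  ultimately show "\<exists>y. (x, y) \<in> C \<and> y \<in> dprime C" by blast
next
  assume "\<exists>y. (x, y) \<in> C \<and> y \<in> dprime C"
  then obtain y s where y: "(x, y) \<in> C" and s: "s 0 = y" "\<forall>n. s (Suc n) \<in> C `` {s n}"
    by (auto simp: dprime_def)
  define t where "t n = (case n of 0 \<Rightarrow> x | Suc k \<Rightarrow> s k)" for n
  have "\<forall>n. t (Suc n) \<in> C `` {t n}"
    using s y by (auto simp: t_def split: nat.splits)
  then show "x \<in> dprime C" unfolding dprime_def by (auto intro!: exI[of _ t] simp: t_def)
qed

lemma sprime_step: "x \<in> sprime C \<longleftrightarrow> (\<exists>y. (x, y) \<in> C \<and> y \<in> sprime C)"
proof
  assume "x \<in> sprime C"
  then obtain s N where s: "s 0 = x" "\<forall>n. s (Suc n) \<in> C `` {s n}" "\<forall>n\<ge>N. s n = 0"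
    by (auto simp: sprime_def)
  have "s 1 \<in> sprime C" unfolding sprime_def using s
    by (auto intro!: exI[of _ "\<lambda>n. s (Suc n)"] exI[of _ N])
  moreover have "(x, s 1) \<in> C" using s by (metis Image_singleton_iff One_nat_def)
  ultimately show "\<exists>y. (x, y) \<in> C \<and> y \<in> sprime C" by blast
next
  assume "\<exists>y. (x, y) \<in> C \<and> y \<in> sprime C"
  then obtain y s N where y: "(x, y) \<in> C" and s: "s 0 = y" "\<forall>n. s (Suc n) \<in> C `` {s n}"
    "\<forall>n\<ge>N. s n = 0"
    by (auto simp: sprime_def)
  define t where "t n = (case n of 0 \<Rightarrow> x | Suc k \<Rightarrow> s k)" for n
  have "\<forall>n. t (Suc n) \<in> C `` {t n}"
    using s y by (auto simp: t_def split: nat.splits)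
  moreover have "\<forall>n\<ge>Suc N. t n = 0" using s(3) by (auto simp: t_def split: nat.splits)
  moreover have "t 0 = x" by (simp add: t_def)
  ultimately show "x \<in> sprime C" unfolding sprime_def by blast
qed

lemma sprime_sub_dprime: "sprime C \<subseteq> dprime C"
  unfolding sprime_def dprime_def by blast

lemma dprime_map:
  assumes "\<forall>x y. (x, y) \<in> B \<longrightarrow> (f x, f y) \<in> C" "x \<in> dprime B"
  shows "f x \<in> dprime C"
proof -
  obtain s where s: "s 0 = x" "\<forall>n. s (Suc n) \<in> B `` {s n}" using assms(2) by (auto simp: dprime_def)
  show ?thesis unfolding dprime_def using s assms(1) by (auto intro!: exI[of _ "\<lambda>n. f (s n)"])
qed

lemma sprime_map:
  assumes "\<forall>x y. (x, y) \<in> B \<longrightarrow> (f x, f y) \<in> C" "f 0 = 0" "x \<in> sprime B"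
  shows "f x \<in> sprime C"
proof -
  obtain s N where s: "s 0 = x" "\<forall>n. s (Suc n) \<in> B `` {s n}" "\<forall>n\<ge>N. s n = 0"
    using assms(3) by (auto simp: sprime_def)
  show ?thesis unfolding sprime_def using s assms(1,2)
    by (auto intro!: exI[of _ "\<lambda>n. f (s n)"] exI[of _ N])
qed

lemma dprime_zero: "is_rel s C \<Longrightarrow> 0 \<in> dprime C"
  unfolding dprime_def using is_relD(1) by (auto intro!: exI[of _ "\<lambda>n. 0"])

lemma sprime_zero: "is_rel s C \<Longrightarrow> 0 \<in> sprime C"
  unfolding sprime_def using is_relD(1) by (auto intro!: exI[of _ "\<lambda>n. 0"])

lemma dprime_add:
  assumes "is_rel s C" "a \<in> dprime C" "b \<in> dprime C"
  shows "a + b \<in> dprime C"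
proof -
  obtain u where u: "u 0 = a" "\<forall>n. u (Suc n) \<in> C `` {u n}" using assms(2) by (auto simp: dprime_def)
  obtain v where v: "v 0 = b" "\<forall>n. v (Suc n) \<in> C `` {v n}" using assms(3) by (auto simp: dprime_def)
  show ?thesis unfolding dprime_def using u v is_relD(2)[OF assms(1)]
    by (auto intro!: exI[of _ "\<lambda>n. u n + v n"])
qed

lemma sprime_add:
  assumes "is_rel s C" "a \<in> sprime C" "b \<in> sprime C"
  shows "a + b \<in> sprime C"
proof -
  obtain u N where u: "u 0 = a" "\<forall>n. u (Suc n) \<in> C `` {u n}" "\<forall>n\<ge>N. u n = 0"
    using assms(2) by (auto simp: sprime_def)
  obtain v M where v: "v 0 = b" "\<forall>n. v (Suc n) \<in> C `` {v n}" "\<forall>n\<ge>M. v n = 0"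
    using assms(3) by (auto simp: sprime_def)
  show ?thesis unfolding sprime_def using u v is_relD(2)[OF assms(1)]
    by (auto intro!: exI[of _ "\<lambda>n. u n + v n"] exI[of _ "max N M"])
qed

lemma dprime_scale:
  assumes "is_rel s C" "a \<in> dprime C"
  shows "s r a \<in> dprime C"
  using dprime_map[OF _ assms(2), of "s r" C] is_relD(3)[OF assms(1)] by blast

lemma sprime_scale:
  assumes "module s" "is_rel s C" "a \<in> sprime C"
  shows "s r a \<in> sprime C"
  using sprime_map[OF _ _ assms(3), of "s r" C] is_relD(3)[OF assms(2)]
    module.scale_zero_right[OF assms(1)] by blast

lemma sharp_zero: "is_rel s C \<Longrightarrow> 0 \<in> sharp C"
  unfolding sharp_def using dprime_zero[of s C] dprime_zero[of s "C\<inverse>"] is_rel_conv[of s C] by blast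

lemma sharp_add: "is_rel s C \<Longrightarrow> a \<in> sharp C \<Longrightarrow> b \<in> sharp C \<Longrightarrow> a + b \<in> sharp C"
  unfolding sharp_def using dprime_add[of s C a b] dprime_add[of s "C\<inverse>" a b] is_rel_conv[of s C] by blast

lemma sharp_scale: "is_rel s C \<Longrightarrow> a \<in> sharp C \<Longrightarrow> s r a \<in> sharp C"
  unfolding sharp_def using dprime_scale[of s C a r] dprime_scale[of s "C\<inverse>" a r] is_rel_conv[of s C] by blast

lemma neg_via_scale: "module s \<Longrightarrow> - a = s (-1) a"
  using module.scale_minus_left module.scale_one by metis

lemma sharp_neg: "module s \<Longrightarrow> is_rel s C \<Longrightarrow> a \<in> sharp C \<Longrightarrow> - a \<in> sharp C"
  using sharp_scale neg_via_scale by metis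

lemma sharp_diff: "module s \<Longrightarrow> is_rel s C \<Longrightarrow> a \<in> sharp C \<Longrightarrow> b \<in> sharp C \<Longrightarrow> a - b \<in> sharp C"
  using sharp_add[of s C a "-b"] sharp_neg[of s C b] by simp

lemma flat_zero: "is_rel s C \<Longrightarrow> 0 \<in> flat C"
  unfolding flat_def set_plus_iff
  using dprime_zero sprime_zero is_rel_conv by (metis IntI add_0)

lemma flat_add: assumes "is_rel s C" "a \<in> flat C" "b \<in> flat C" shows "a + b \<in> flat C"
proof -
  obtain a1 a2 where a: "a1 \<in> dprime C \<inter> sprime (C\<inverse>)" "a2 \<in> dprime (C\<inverse>) \<inter> sprime C" "a = a1 + a2"
    using assms(2) by (auto simp: flat_def set_plus_iff)
  obtain b1 b2 where b: "b1 \<in> dprime C \<inter> sprime (C\<inverse>)" "b2 \<in> dprime (C\<inverse>) \<inter> sprime C" "b = b1 + b2"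
    using assms(3) by (auto simp: flat_def set_plus_iff)
  have cv: "is_rel s (C\<inverse>)" using assms(1) by (rule is_rel_conv)
  have "a1 + b1 \<in> dprime C \<inter> sprime (C\<inverse>)"
    using a b assms(1) cv dprime_add sprime_add by blast
  moreover have "a2 + b2 \<in> dprime (C\<inverse>) \<inter> sprime C"
    using a b assms(1) cv dprime_add sprime_add by blast
  moreover have "a + b = (a1 + b1) + (a2 + b2)" using a b by (simp add: algebra_simps)
  ultimately show ?thesis unfolding flat_def set_plus_iff by blast
qed

lemma flat_scale: assumes "module s" "is_rel s C" "a \<in> flat C" shows "s r a \<in> flat C"
proof -
  obtain a1 a2 where a: "a1 \<in> dprime C \<inter> sprime (C\<inverse>)" "a2 \<in> dprime (C\<inverse>) \<inter> sprime C" "a = a1 + a2"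
    using assms(3) by (auto simp: flat_def set_plus_iff)
  have cv: "is_rel s (C\<inverse>)" using assms(2) by (rule is_rel_conv)
  have "s r a1 \<in> dprime C \<inter> sprime (C\<inverse>)"
    using a assms(1,2) cv dprime_scale sprime_scale by blast
  moreover have "s r a2 \<in> dprime (C\<inverse>) \<inter> sprime C"
    using a assms(1,2) cv dprime_scale sprime_scale by blast
  moreover have "s r a = s r a1 + s r a2" using a module.scale_right_distrib[OF assms(1)] by simp
  ultimately show ?thesis unfolding flat_def set_plus_iff by blast
qed

lemma flat_neg: "module s \<Longrightarrow> is_rel s C \<Longrightarrow> a \<in> flat C \<Longrightarrow> - a \<in> flat C"
  using flat_scale neg_via_scale by metis

lemma flat_diff: "module s \<Longrightarrow> is_rel s C \<Longrightarrow> a \<in> flat C \<Longrightarrow> b \<in> flat C \<Longrightarrow> a - b \<in> flat C"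
  using flat_add[of s C a "-b"] flat_neg[of s C b] by simp

lemma flat_sharp: assumes "is_rel s C" "a \<in> flat C" shows "a \<in> sharp C"
proof -
  have cv: "is_rel s (C\<inverse>)" using assms(1) by (rule is_rel_conv)
  obtain a1 a2 where a: "a1 \<in> dprime C \<inter> sprime (C\<inverse>)" "a2 \<in> dprime (C\<inverse>) \<inter> sprime C" "a = a1 + a2"
    using assms(2) by (auto simp: flat_def set_plus_iff)
  then have "a1 \<in> sharp C" "a2 \<in> sharp C" unfolding sharp_def using sprime_sub_dprime by blast+
  then show ?thesis using a sharp_add[OF assms(1)] by simp
qed

lemma flat_map:
  assumes "module_hom sL sM f" "\<forall>x y. (x, y) \<in> B \<longrightarrow> (f x, f y) \<in> C" "a \<in> flat B"
  shows "f a \<in> flat C"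
proof -
  have f0: "f 0 = 0" using assms(1) module_hom.zero by blast
  have fadd: "\<And>x y. f (x + y) = f x + f y" using assms(1) module_hom_iff by blast
  have conv: "\<forall>x y. (x, y) \<in> B\<inverse> \<longrightarrow> (f x, f y) \<in> C\<inverse>" using assms(2) by auto
  obtain a1 a2 where a: "a1 \<in> dprime B \<inter> sprime (B\<inverse>)" "a2 \<in> dprime (B\<inverse>) \<inter> sprime B" "a = a1 + a2"
    using assms(3) by (auto simp: flat_def set_plus_iff)
  have "f a1 \<in> dprime C \<inter> sprime (C\<inverse>)"
    using a assms(2) conv f0 dprime_map sprime_map by blast
  moreover have "f a2 \<in> dprime (C\<inverse>) \<inter> sprime C"
    using a assms(2) conv f0 dprime_map sprime_map by blast
  moreover have "f a = f a1 + f a2" using a fadd by simp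
  ultimately show ?thesis unfolding flat_def set_plus_iff by blast
qed

lemma sharp_map:
  assumes "\<forall>x y. (x, y) \<in> B \<longrightarrow> (f x, f y) \<in> C" "a \<in> sharp B"
  shows "f a \<in> sharp C"
proof -
  have conv: "\<forall>x y. (x, y) \<in> B\<inverse> \<longrightarrow> (f x, f y) \<in> C\<inverse>" using assms(1) by auto
  show ?thesis using assms conv dprime_map unfolding sharp_def by blast
qed

lemma coset_iff: "z \<in> coset C a \<longleftrightarrow> (\<exists>c\<in>flat C. z = a + c)"
  by (auto simp: coset_def)

lemma coset_self: "is_rel s C \<Longrightarrow> a \<in> coset C a"
  using flat_zero[of s C] by (auto simp: coset_iff intro!: bexI[of _ 0])

lemma coset_eq_iff:
  assumes "module s" "is_rel s C"
  shows "coset C a = coset C b \<longleftrightarrow> a - b \<in> flat C"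
proof
  assume "coset C a = coset C b"
  moreover have "a \<in> coset C a" using coset_self[OF assms(2)] .
  ultimately obtain c where "c \<in> flat C" "a = b + c" by (auto simp: coset_iff)
  then show "a - b \<in> flat C" by (simp add: algebra_simps)
next
  assume h: "a - b \<in> flat C"
  show "coset C a = coset C b"
  proof (rule set_eqI)
    fix z
    show "z \<in> coset C a \<longleftrightarrow> z \<in> coset C b"
    proof
      assume "z \<in> coset C a"
      then obtain c where c: "c \<in> flat C" "z = a + c" by (auto simp: coset_iff)
      then have "a - b + c \<in> flat C" using flat_add[OF assms(2) h] by blast
      moreover have "z = b + (a - b + c)" using c by (simp add: algebra_simps)
      ultimately show "z \<in> coset C b" unfolding coset_iff by blast
    next
      assume "z \<in> coset C b"
      then obtain c where c: "c \<in> flat C" "z = b + c" by (auto simp: coset_iff)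
      then have "c - (a - b) \<in> flat C" using flat_diff[OF assms _ h] by blast
      moreover have "z = a + (c - (a - b))" using c by (simp add: algebra_simps)
      ultimately show "z \<in> coset C a" unfolding coset_iff by blast
    qed
  qed
qed

lemma qadd_coset:
  assumes "module s" "is_rel s C"
  shows "qadd (coset C a) (coset C b) = coset C (a + b)"
proof (rule set_eqI)
  fix z
  show "z \<in> qadd (coset C a) (coset C b) \<longleftrightarrow> z \<in> coset C (a + b)"
  proof
    assume "z \<in> qadd (coset C a) (coset C b)"
    then obtain c d where cd: "c \<in> flat C" "d \<in> flat C" "z = (a + c) + (b + d)"
      by (auto simp: qadd_def set_plus_iff coset_iff)
    then have "c + d \<in> flat C" using flat_add[OF assms(2)] by blast
    moreover have "z = (a + b) + (c + d)" using cd by (simp add: algebra_simps)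
    ultimately show "z \<in> coset C (a + b)" unfolding coset_iff by blast
  next
    assume "z \<in> coset C (a + b)"
    then obtain c where c: "c \<in> flat C" "z = (a + b) + c" by (auto simp: coset_iff)
    have "a + c \<in> coset C a" using c by (auto simp: coset_iff)
    moreover have "b \<in> coset C b" using coset_self[OF assms(2)] .
    moreover have "z = (a + c) + b" using c by (simp add: algebra_simps)
    ultimately show "z \<in> qadd (coset C a) (coset C b)" unfolding qadd_def set_plus_iff by blast
  qed
qed

lemma qscale_coset:
  assumes "module s" "is_rel s C"
  shows "qscale s C r (coset C a) = coset C (s r a)"
proof (rule set_eqI)
  fix z
  show "z \<in> qscale s C r (coset C a) \<longleftrightarrow> z \<in> coset C (s r a)"
  proof
    assume "z \<in> qscale s C r (coset C a)"
    then obtain c d where cd: "c \<in> flat C" "d \<in> flat C" "z = s r (a + c) + d"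
      by (auto simp: qscale_def set_plus_iff coset_iff)
    then have "s r c + d \<in> flat C" using flat_add[OF assms(2)] flat_scale[OF assms] by blast
    moreover have "z = s r a + (s r c + d)" using cd module.scale_right_distrib[OF assms(1)]
      by (simp add: algebra_simps)
    ultimately show "z \<in> coset C (s r a)" unfolding coset_iff by blast
  next
    assume "z \<in> coset C (s r a)"
    then obtain c where c: "c \<in> flat C" "z = s r a + c" by (auto simp: coset_iff)
    have "s r a \<in> s r ` coset C a" using coset_self[OF assms(2)] by blast
    then show "z \<in> qscale s C r (coset C a)" unfolding qscale_def set_plus_iff using c by blast
  qed
qed

lemma qmap_coset:
  assumes "module sL" "module sM" "is_rel sL B" "is_rel sM C" "rel_mor sL sM B C f" "l \<in> sharp B"
  shows "qmap B C f (coset B l) = coset C (f l)"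
proof -
  have ex: "\<exists>l'. l' \<in> sharp B \<and> coset B l = coset B l'" using assms(6) by blast
  define l' where "l' = (SOME l'. l' \<in> sharp B \<and> coset B l = coset B l')"
  have l': "l' \<in> sharp B \<and> coset B l = coset B l'" unfolding l'_def using someI_ex[OF ex] .
  then have "l - l' \<in> flat B" using coset_eq_iff[OF assms(1,3)] by blast
  then have "f (l - l') \<in> flat C" using flat_map assms(5) unfolding rel_mor_def by blast
  moreover have "f l = f (l - l') + f l'" using assms(5) unfolding rel_mor_def module_hom_iff
    by (metis diff_add_cancel)
  ultimately have "f l' - f l \<in> flat C"
    using flat_neg[OF assms(2,4)] by (metis add_diff_cancel_right' minus_diff_eq)
  then have "coset C (f l') = coset C (f l)"
    using coset_eq_iff[OF assms(2,4)] by blast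
  then show ?thesis unfolding qmap_def l'_def[symmetric] by simp
qed

lemma zero_step_flat:
  assumes "is_rel s C" "(0, d) \<in> C" "d \<in> dprime C"
  shows "d \<in> flat C"
proof -
  have cv: "is_rel s (C\<inverse>)" using assms(1) by (rule is_rel_conv)
  have "d \<in> sprime (C\<inverse>)" using sprime_step[of d "C\<inverse>"] assms(2) sprime_zero[OF cv] by blast
  moreover have "0 \<in> dprime (C\<inverse>) \<inter> sprime C" using dprime_zero[OF cv] sprime_zero[OF assms(1)] by blast
  moreover have "d = d + 0" by simp
  ultimately show ?thesis using assms(3) unfolding flat_def set_plus_iff by blast
qed

lemma flat_step:
  assumes "is_rel s C" "m0 \<in> flat C"
  shows "\<exists>c0\<in>flat C. (m0, c0) \<in> C"
proof -
  obtain a1 a2 where a: "a1 \<in> dprime C \<inter> sprime (C\<inverse>)" "a2 \<in> dprime (C\<inverse>) \<inter> sprime C" "m0 = a1 + a2"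
    using assms(2) by (auto simp: flat_def set_plus_iff)
  obtain y1 where y1: "(a1, y1) \<in> C" "y1 \<in> dprime C" using a(1) dprime_step by blast
  have y1': "y1 \<in> sprime (C\<inverse>)" using sprime_step[of y1 "C\<inverse>"] y1(1) a(1) by blast
  obtain y2 where y2: "(a2, y2) \<in> C" "y2 \<in> sprime C" using a(2) sprime_step by blast
  have y2': "y2 \<in> dprime (C\<inverse>)" using dprime_step[of y2 "C\<inverse>"] y2(1) a(2) by blast
  have "y1 + y2 \<in> flat C" unfolding flat_def set_plus_iff using y1 y1' y2 y2' by blast
  moreover have "(m0, y1 + y2) \<in> C" using is_relD(2)[OF assms(1) y1(1) y2(1)] a(3) by simp
  ultimately show ?thesis by blast
qed

lemma theta_next:
  assumes "is_rel s C" "m \<in> sharp C"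
  shows "\<exists>m'. (m, m') \<in> C \<and> m' \<in> sharp C"
proof -
  obtain y where y: "(m, y) \<in> C" "y \<in> dprime C" using assms(2) dprime_step unfolding sharp_def by blast
  have "y \<in> dprime (C\<inverse>)" using dprime_step[of y "C\<inverse>"] y(1) assms(2) unfolding sharp_def by blast
  then show ?thesis using y unfolding sharp_def by blast
qed

lemma theta_uniq:
  assumes "module s" "is_rel s C" "m - m1 \<in> flat C"
    "m' \<in> sharp C" "m' \<in> set_plus (flat C) (C `` {m})"
    "m1' \<in> sharp C" "m1' \<in> set_plus (flat C) (C `` {m1})"
  shows "m' - m1' \<in> flat C"
proof -
  obtain a c where ac: "a \<in> flat C" "(m, c) \<in> C" "m' = a + c" using assms(5) by (auto simp: set_plus_iff)
  obtain a1 c1 where ac1: "a1 \<in> flat C" "(m1, c1) \<in> C" "m1' = a1 + c1" using assms(7) by (auto simp: set_plus_iff)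
  obtain c0 where c0: "c0 \<in> flat C" "(m - m1, c0) \<in> C" using flat_step[OF assms(2,3)] by blast
  define d where "d = c - c1 - c0"
  have "(m - m1, c - c1) \<in> C" using rel_diff[OF assms(1,2) ac(2) ac1(2)] .
  from rel_diff[OF assms(1,2) this c0(2)] have d0: "(0, d) \<in> C" by (simp add: d_def)
  have "d = (m' - a) - (m1' - a1) - c0" using ac ac1 by (simp add: d_def)
  moreover have "m' - a \<in> sharp C" using sharp_diff[OF assms(1,2) assms(4) flat_sharp[OF assms(2) ac(1)]] .
  moreover have "m1' - a1 \<in> sharp C" using sharp_diff[OF assms(1,2) assms(6) flat_sharp[OF assms(2) ac1(1)]] .
  ultimately have "d \<in> sharp C" using sharp_diff[OF assms(1,2)] flat_sharp[OF assms(2) c0(1)] by metis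
  then have "d \<in> flat C" using zero_step_flat[OF assms(2) d0] unfolding sharp_def by blast
  moreover have "m' - m1' = (a - a1) + c0 + d" using ac ac1 by (simp add: d_def algebra_simps)
  moreover have "a - a1 \<in> flat C" using flat_diff[OF assms(1,2) ac(1) ac1(1)] .
  ultimately show ?thesis using flat_add[OF assms(2)] c0(1) by metis
qed

lemma theta_eq:
  assumes "module s" "is_rel s C" "m \<in> sharp C" "m' \<in> sharp C" "m' \<in> set_plus (flat C) (C `` {m})"
  shows "theta C (coset C m) = coset C m'"
  unfolding theta_def
proof (rule the_equality)
  show "\<exists>m1 m1'. m1 \<in> sharp C \<and> coset C m = coset C m1 \<and>
       m1' \<in> sharp C \<inter> set_plus (flat C) (C `` {m1}) \<and> coset C m' = coset C m1'"
    using assms by blast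
next
  fix Y assume "\<exists>m1 m1'. m1 \<in> sharp C \<and> coset C m = coset C m1 \<and>
       m1' \<in> sharp C \<inter> set_plus (flat C) (C `` {m1}) \<and> Y = coset C m1'"
  then obtain m1 m1' where h: "m1 \<in> sharp C" "coset C m = coset C m1"
    "m1' \<in> sharp C" "m1' \<in> set_plus (flat C) (C `` {m1})" "Y = coset C m1'" by blast
  have "m - m1 \<in> flat C" using h(2) coset_eq_iff[OF assms(1,2)] by blast
  then have "m' - m1' \<in> flat C" using theta_uniq[OF assms(1,2) _ assms(4,5) h(3,4)] by blast
  then have "m1' - m' \<in> flat C" using flat_neg[OF assms(1,2)] by (metis minus_diff_eq)
  then show "Y = coset C m'" using h(5) coset_eq_iff[OF assms(1,2)] by blast
qed

lemma theta_coset: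
  assumes "module s" "is_rel s C" "m \<in> sharp C" "(m, m') \<in> C" "m' \<in> sharp C"
  shows "theta C (coset C m) = coset C m'"
proof -
  have "m' \<in> set_plus (flat C) (C `` {m})" using assms(4) flat_zero[OF assms(2)]
    unfolding set_plus_iff by force
  then show ?thesis using theta_eq[OF assms(1,2,3,5)] by blast
qed

lemma graph_is_rel:
  assumes "module_hom s s T" shows "is_rel s (graph T)"
  using assms module_hom.zero[OF assms] unfolding is_rel_def module_hom_iff by auto

lemma bij_T_inv: "bij T \<Longrightarrow> T (inv T y) = y"
  by (simp add: bij_is_surj surj_f_inv_f)

lemma sharp_graph:
  assumes "bij T" shows "sharp (graph T) = UNIV"
proof -
  have "x \<in> dprime (graph T)" for x
    unfolding dprime_def by (auto intro!: exI[of _ "\<lambda>n. (T ^^ n) x"])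
  moreover have "x \<in> dprime ((graph T)\<inverse>)" for x
    unfolding dprime_def using bij_T_inv[OF assms] by (auto intro!: exI[of _ "\<lambda>n. (inv T ^^ n) x"])
  ultimately show ?thesis unfolding sharp_def by blast
qed

lemma fwd_zero: "(\<forall>n. s (Suc n) = T (s n)) \<Longrightarrow> inj T \<Longrightarrow> T 0 = 0 \<Longrightarrow> s N = 0 \<Longrightarrow> s 0 = 0"
proof (induction N arbitrary: s)
  case 0 then show ?case by simp
next
  case (Suc N)
  have "s (Suc 0) = 0" using Suc.IH[of "\<lambda>n. s (Suc n)"] Suc.prems by auto
  then have "T (s 0) = T 0" using Suc.prems by simp
  then show ?case using Suc.prems(2) by (meson injD)
qed

lemma bwd_zero: "(\<forall>n. s n = T (s (Suc n))) \<Longrightarrow> T 0 = 0 \<Longrightarrow> s N = 0 \<Longrightarrow> s 0 = 0"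
proof (induction N arbitrary: s)
  case 0 then show ?case by blast
next
  case (Suc N)
  have "\<forall>n. s (Suc n) = T (s (Suc (Suc n)))" using Suc.prems(1) by blast
  then have "s (Suc 0) = 0" using Suc.IH[of "\<lambda>n. s (Suc n)"] Suc.prems(2,3) by blast
  then show ?case using Suc.prems by metis
qed

lemma flat_graph:
  assumes "module_hom s s T" "bij T" shows "flat (graph T) = {0}"
proof -
  have T0: "T 0 = 0" using module_hom.zero[OF assms(1)] .
  have "sprime (graph T) \<subseteq> {0}"
  proof
    fix x assume "x \<in> sprime (graph T)"
    then obtain q N where q: "q 0 = x" "\<forall>n. q (Suc n) \<in> (graph T) `` {q n}" "\<forall>n\<ge>N. q n = 0"
      unfolding sprime_def by blast
    have st: "\<forall>n. q (Suc n) = T (q n)"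
    proof
      fix n from q(2) have "q (Suc n) \<in> (graph T) `` {q n}" by blast
      then show "q (Suc n) = T (q n)" by auto
    qed
    have "q N = 0" using q(3) by blast
    then have "q 0 = 0" using fwd_zero[of q T N] st T0 bij_is_inj[OF assms(2)] by blast
    then show "x \<in> {0}" using q(1) by simp
  qed
  moreover have "sprime ((graph T)\<inverse>) \<subseteq> {0}"
  proof
    fix x assume "x \<in> sprime ((graph T)\<inverse>)"
    then obtain q N where q: "q 0 = x" "\<forall>n. q (Suc n) \<in> (graph T)\<inverse> `` {q n}" "\<forall>n\<ge>N. q n = 0"
      unfolding sprime_def by blast
    have st: "\<forall>n. q n = T (q (Suc n))"
    proof
      fix n from q(2) have "q (Suc n) \<in> (graph T)\<inverse> `` {q n}" by blast
      then show "q n = T (q (Suc n))" by auto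
    qed
    have "q N = 0" using q(3) by blast
    then have "q 0 = 0" using bwd_zero[of q T N] st T0 by blast
    then show "x \<in> {0}" using q(1) by simp
  qed
  ultimately have "flat (graph T) \<subseteq> {0}"
  proof -
    assume h1: "sprime (graph T) \<subseteq> {0}" and h2: "sprime ((graph T)\<inverse>) \<subseteq> {0}"
    show ?thesis
    proof
      fix z assume "z \<in> flat (graph T)"
      then obtain a b where "a \<in> sprime ((graph T)\<inverse>)" "b \<in> sprime (graph T)" "z = a + b"
        unfolding flat_def set_plus_iff by blast
      then show "z \<in> {0}" using h1 h2 by (metis add_0 singletonD singletonI subsetD)
    qed
  qed
  then show ?thesis using flat_zero[OF graph_is_rel[OF assms(1)]] by blast
qed

lemma coset_graph:
  assumes "module_hom s s T" "bij T" shows "coset (graph T) x = {x}"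
  unfolding coset_def flat_graph[OF assms] by simp

lemma rel_morD:
  assumes "rel_mor sL sM B C f"
  shows "f (x + y) = f x + f y" "f (sL r x) = sM r (f x)" "(x, y) \<in> B \<Longrightarrow> (f x, f y) \<in> C"
    "\<forall>x y. (x, y) \<in> B \<longrightarrow> (f x, f y) \<in> C"
  using assms unfolding rel_mor_def module_hom_iff by blast+

lemma quotE:
  assumes "X \<in> quot B" obtains l where "l \<in> sharp B" "X = coset B l"
  using assms unfolding quot_def by blast

lemma part1:
  assumes mL: "module sL" and mM: "module sM" and rB: "is_rel sL B" and rC: "is_rel sM C"
    and f: "rel_mor sL sM B C f"
  shows
      "(\<forall>l\<in>sharp B. f l \<in> sharp C) \<and>
      (\<forall>l\<in>sharp B. \<forall>l'\<in>sharp B. coset B l = coset B l' \<longrightarrow> coset C (f l) = coset C (f l')) \<and>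
      (\<forall>X\<in>quot B. \<forall>Y\<in>quot B. qmap B C f (qadd X Y) = qadd (qmap B C f X) (qmap B C f Y)) \<and>
      (\<forall>r. \<forall>X\<in>quot B. qmap B C f (qscale sL B r X) = qscale sM C r (qmap B C f X)) \<and>
      (\<forall>X\<in>quot B. qmap B C f (theta B X) = theta C (qmap B C f X))"
proof (intro conjI ballI allI impI)
  note qm = qmap_coset[OF mL mM rB rC f]
  fix l assume l: "l \<in> sharp B"
  show "f l \<in> sharp C" using sharp_map[OF rel_morD(4)[OF f] l] .
next
  note qm = qmap_coset[OF mL mM rB rC f]
  fix l l' assume "l \<in> sharp B" "l' \<in> sharp B" "coset B l = coset B l'"
  then show "coset C (f l) = coset C (f l')" using qm by metis
next
  note qm = qmap_coset[OF mL mM rB rC f]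
  fix X Y assume "X \<in> quot B" "Y \<in> quot B"
  then obtain l l' where l: "l \<in> sharp B" "X = coset B l" "l' \<in> sharp B" "Y = coset B l'"
    by (metis quotE)
  have "qmap B C f (qadd X Y) = qmap B C f (coset B (l + l'))" using qadd_coset[OF mL rB] l by simp
  also have "\<dots> = coset C (f (l + l'))" using qm sharp_add[OF rB l(1) l(3)] by blast
  also have "\<dots> = coset C (f l + f l')" using rel_morD(1)[OF f] by simp
  also have "\<dots> = qadd (qmap B C f X) (qmap B C f Y)" using qadd_coset[OF mM rC] qm l by simp
  finally show "qmap B C f (qadd X Y) = qadd (qmap B C f X) (qmap B C f Y)" .
next
  note qm = qmap_coset[OF mL mM rB rC f]
  fix r X assume "X \<in> quot B"
  then obtain l where l: "l \<in> sharp B" "X = coset B l" by (metis quotE)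
  have "qmap B C f (qscale sL B r X) = qmap B C f (coset B (sL r l))" using qscale_coset[OF mL rB] l by simp
  also have "\<dots> = coset C (f (sL r l))" using qm sharp_scale[OF rB l(1)] by blast
  also have "\<dots> = coset C (sM r (f l))" using rel_morD(2)[OF f] by simp
  also have "\<dots> = qscale sM C r (qmap B C f X)" using qscale_coset[OF mM rC] qm l by simp
  finally show "qmap B C f (qscale sL B r X) = qscale sM C r (qmap B C f X)" .
next
  note qm = qmap_coset[OF mL mM rB rC f]
  fix X assume "X \<in> quot B"
  then obtain l where l: "l \<in> sharp B" "X = coset B l" by (metis quotE)
  obtain l1 where l1: "(l, l1) \<in> B" "l1 \<in> sharp B" using theta_next[OF rB l(1)] by blast
  have th: "theta B X = coset B l1" using theta_coset[OF mL rB l(1) l1(1) l1(2)] l(2) by simp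
  have fl: "f l \<in> sharp C" "f l1 \<in> sharp C" using sharp_map[OF rel_morD(4)[OF f]] l(1) l1(2) by blast+
  have "theta C (coset C (f l)) = coset C (f l1)"
    using theta_coset[OF mM rC fl(1) rel_morD(3)[OF f l1(1)] fl(2)] .
  then show "qmap B C f (theta B X) = theta C (qmap B C f X)" using th qm l l1 by simp
qed

theorem lemma4p7:
  fixes sL :: "'r::comm_ring_1 \<Rightarrow> 'l::ab_group_add \<Rightarrow> 'l"
    and sM :: "'r \<Rightarrow> 'm::ab_group_add \<Rightarrow> 'm"
    and sN :: "'r \<Rightarrow> 'n::ab_group_add \<Rightarrow> 'n"
  assumes "module sL" and "module sM" and "module sN"
  shows
  \<comment> \<open>sharp/flat on morphisms: well defined, and R[T,T^-1]-linear (R-linear and commuting with theta)\<close>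
  "(\<forall>B C f. is_rel sL B \<and> is_rel sM C \<and> rel_mor sL sM B C f \<longrightarrow>
      (\<forall>l\<in>sharp B. f l \<in> sharp C) \<and>
      (\<forall>l\<in>sharp B. \<forall>l'\<in>sharp B. coset B l = coset B l' \<longrightarrow> coset C (f l) = coset C (f l')) \<and>
      (\<forall>X\<in>quot B. \<forall>Y\<in>quot B. qmap B C f (qadd X Y) = qadd (qmap B C f X) (qmap B C f Y)) \<and>
      (\<forall>r. \<forall>X\<in>quot B. qmap B C f (qscale sL B r X) = qscale sM C r (qmap B C f X)) \<and>
      (\<forall>X\<in>quot B. qmap B C f (theta B X) = theta C (qmap B C f X)))
   \<comment> \<open>functoriality: identities\<close>
   \<and> (\<forall>B. is_rel sL B \<longrightarrow> rel_mor sL sL B B id \<and> (\<forall>X\<in>quot B. qmap B B id X = X))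
   \<comment> \<open>functoriality: composition\<close>
   \<and> (\<forall>B C D f g. is_rel sL B \<and> is_rel sM C \<and> is_rel sN D \<and>
        rel_mor sL sM B C f \<and> rel_mor sM sN C D g \<longrightarrow>
        rel_mor sL sN B D (g \<circ> f) \<and>
        (\<forall>X\<in>quot B. qmap B D (g \<circ> f) X = qmap C D g (qmap B C f X)))
   \<comment> \<open>R-linearity of the functor sharp/flat\<close>
   \<and> (\<forall>B C f g r. is_rel sL B \<and> is_rel sM C \<and> rel_mor sL sM B C f \<and> rel_mor sL sM B C g \<longrightarrow>
        rel_mor sL sM B C (\<lambda>x. f x + g x) \<and> rel_mor sL sM B C (\<lambda>x. sM r (f x)) \<and>
        (\<forall>X\<in>quot B. qmap B C (\<lambda>x. f x + g x) X = qadd (qmap B C f X) (qmap B C g X)) \<and>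
        (\<forall>X\<in>quot B. qmap B C (\<lambda>x. sM r (f x)) X = qscale sM C r (qmap B C f X)))
   \<comment> \<open>graph_T: objects are sent to Rel_R objects, R[T,T^-1]-linear maps to Rel_R morphisms\<close>
   \<and> (\<forall>T. module_hom sL sL T \<and> bij T \<longrightarrow> is_rel sL (graph T))
   \<and> (\<forall>T T' g. module_hom sL sL T \<and> bij T \<and> module_hom sM sM T' \<and> bij T' \<and>
        module_hom sL sM g \<and> g \<circ> T = T' \<circ> g \<longrightarrow> rel_mor sL sM (graph T) (graph T') g)
   \<comment> \<open>(sharp/flat) o graph_T is the identity (X/0 identified with X via x |-> {x})\<close>
   \<and> (\<forall>T. module_hom sL sL T \<and> bij T \<longrightarrow>
        sharp (graph T) = UNIV \<and> flat (graph T) = {0} \<and>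
        (\<forall>x. coset (graph T) x = {x}) \<and>
        (\<forall>x. theta (graph T) {x} = {T x}))
   \<and> (\<forall>T T' g. module_hom sL sL T \<and> bij T \<and> module_hom sM sM T' \<and> bij T' \<and>
        module_hom sL sM g \<and> g \<circ> T = T' \<circ> g \<longrightarrow>
        (\<forall>x. qmap (graph T) (graph T') g {x} = {g x}))"
  using assms
proof -
  note mL = assms(1) and mM = assms(2) and mN = assms(3)
  have idm: "rel_mor sL sL B B id" for B
    unfolding rel_mor_def module_hom_iff using mL by simp
  show ?thesis
  proof (intro conjI)
    show "\<forall>B C f. is_rel sL B \<and> is_rel sM C \<and> rel_mor sL sM B C f \<longrightarrow>
      (\<forall>l\<in>sharp B. f l \<in> sharp C) \<and>
      (\<forall>l\<in>sharp B. \<forall>l'\<in>sharp B. coset B l = coset B l' \<longrightarrow> coset C (f l) = coset C (f l')) \<and>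
      (\<forall>X\<in>quot B. \<forall>Y\<in>quot B. qmap B C f (qadd X Y) = qadd (qmap B C f X) (qmap B C f Y)) \<and>
      (\<forall>r. \<forall>X\<in>quot B. qmap B C f (qscale sL B r X) = qscale sM C r (qmap B C f X)) \<and>
      (\<forall>X\<in>quot B. qmap B C f (theta B X) = theta C (qmap B C f X))"
      using part1[OF mL mM] by blast
  next
    show "\<forall>B. is_rel sL B \<longrightarrow> rel_mor sL sL B B id \<and> (\<forall>X\<in>quot B. qmap B B id X = X)"
    proof (intro allI impI conjI ballI)
      fix B assume B: "is_rel sL B"
      show "rel_mor sL sL B B id" by (rule idm)
      fix X assume X: "X \<in> quot B"
      from X obtain l where "l \<in> sharp B" "X = coset B l" by (metis quotE)
      then show "qmap B B id X = X" using qmap_coset[OF mL mL B B idm] by simp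
    qed
  next
    show "\<forall>B C D f g. is_rel sL B \<and> is_rel sM C \<and> is_rel sN D \<and>
        rel_mor sL sM B C f \<and> rel_mor sM sN C D g \<longrightarrow>
        rel_mor sL sN B D (g \<circ> f) \<and>
        (\<forall>X\<in>quot B. qmap B D (g \<circ> f) X = qmap C D g (qmap B C f X))"
    proof (intro allI impI conjI ballI)
      fix B C D f g assume h: "is_rel sL B \<and> is_rel sM C \<and> is_rel sN D \<and>
        rel_mor sL sM B C f \<and> rel_mor sM sN C D g"
      then have B: "is_rel sL B" and C: "is_rel sM C" and D: "is_rel sN D"
        and f: "rel_mor sL sM B C f" and g: "rel_mor sM sN C D g" by blast+
      show gf: "rel_mor sL sN B D (g \<circ> f)"
        using f g mL mN unfolding rel_mor_def module_hom_iff by simp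
      fix X assume "X \<in> quot B"
      then obtain l where l: "l \<in> sharp B" "X = coset B l" by (metis quotE)
      have fl: "f l \<in> sharp C" using sharp_map[OF rel_morD(4)[OF f] l(1)] .
      show "qmap B D (g \<circ> f) X = qmap C D g (qmap B C f X)"
        using qmap_coset[OF mL mN B D gf l(1)] qmap_coset[OF mL mM B C f l(1)]
          qmap_coset[OF mM mN C D g fl] l(2) by simp
    qed
  next
    show "\<forall>B C f g r. is_rel sL B \<and> is_rel sM C \<and> rel_mor sL sM B C f \<and> rel_mor sL sM B C g \<longrightarrow>
        rel_mor sL sM B C (\<lambda>x. f x + g x) \<and> rel_mor sL sM B C (\<lambda>x. sM r (f x)) \<and>
        (\<forall>X\<in>quot B. qmap B C (\<lambda>x. f x + g x) X = qadd (qmap B C f X) (qmap B C g X)) \<and>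
        (\<forall>X\<in>quot B. qmap B C (\<lambda>x. sM r (f x)) X = qscale sM C r (qmap B C f X))"
    proof (intro allI impI conjI ballI)
      fix B C f g r assume h: "is_rel sL B \<and> is_rel sM C \<and> rel_mor sL sM B C f \<and> rel_mor sL sM B C g"
      then have B: "is_rel sL B" and C: "is_rel sM C"
        and f: "rel_mor sL sM B C f" and g: "rel_mor sL sM B C g" by blast+
      show fg: "rel_mor sL sM B C (\<lambda>x. f x + g x)"
        unfolding rel_mor_def
      proof
        show "module_hom sL sM (\<lambda>x. f x + g x)"
          using f g mL mM module.scale_right_distrib[OF mM] unfolding rel_mor_def module_hom_iff
          by (simp add: algebra_simps)
        show "\<forall>x y. (x, y) \<in> B \<longrightarrow> (f x + g x, f y + g y) \<in> C"
          using rel_morD(3)[OF f] rel_morD(3)[OF g] is_relD(2)[OF C] by blast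
      qed
      show rf: "rel_mor sL sM B C (\<lambda>x. sM r (f x))"
        unfolding rel_mor_def
      proof
        show "module_hom sL sM (\<lambda>x. sM r (f x))"
          using f mL mM module.scale_right_distrib[OF mM] module.scale_left_commute[OF mM]
          unfolding rel_mor_def module_hom_iff by simp
        show "\<forall>x y. (x, y) \<in> B \<longrightarrow> (sM r (f x), sM r (f y)) \<in> C"
          using rel_morD(3)[OF f] is_relD(3)[OF C] by blast
      qed
      fix X assume "X \<in> quot B"
      then obtain l where l: "l \<in> sharp B" "X = coset B l" by (metis quotE)
      show "qmap B C (\<lambda>x. f x + g x) X = qadd (qmap B C f X) (qmap B C g X)"
        using qmap_coset[OF mL mM B C fg l(1)] qmap_coset[OF mL mM B C f l(1)]
          qmap_coset[OF mL mM B C g l(1)] qadd_coset[OF mM C] l(2) by simp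
    next
      fix B C f g r assume h: "is_rel sL B \<and> is_rel sM C \<and> rel_mor sL sM B C f \<and> rel_mor sL sM B C g"
      then have B: "is_rel sL B" and C: "is_rel sM C"
        and f: "rel_mor sL sM B C f" by blast+
      have rf: "rel_mor sL sM B C (\<lambda>x. sM r (f x))"
        unfolding rel_mor_def
      proof
        show "module_hom sL sM (\<lambda>x. sM r (f x))"
          using f mL mM module.scale_right_distrib[OF mM] module.scale_left_commute[OF mM]
          unfolding rel_mor_def module_hom_iff by simp
        show "\<forall>x y. (x, y) \<in> B \<longrightarrow> (sM r (f x), sM r (f y)) \<in> C"
          using rel_morD(3)[OF f] is_relD(3)[OF C] by blast
      qed
      fix X assume "X \<in> quot B"
      then obtain l where l: "l \<in> sharp B" "X = coset B l" by (metis quotE)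
      show "qmap B C (\<lambda>x. sM r (f x)) X = qscale sM C r (qmap B C f X)"
        using qmap_coset[OF mL mM B C rf l(1)] qmap_coset[OF mL mM B C f l(1)]
          qscale_coset[OF mM C] l(2) by simp
    qed
  next
    show "\<forall>T. module_hom sL sL T \<and> bij T \<longrightarrow> is_rel sL (graph T)"
      using graph_is_rel by blast
  next
    show "\<forall>T T' g. module_hom sL sL T \<and> bij T \<and> module_hom sM sM T' \<and> bij T' \<and>
        module_hom sL sM g \<and> g \<circ> T = T' \<circ> g \<longrightarrow> rel_mor sL sM (graph T) (graph T') g"
    proof (intro allI impI)
      fix T T' g assume h: "module_hom sL sL T \<and> bij T \<and> module_hom sM sM T' \<and> bij T' \<and>
        module_hom sL sM g \<and> g \<circ> T = T' \<circ> g"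
      then have "\<forall>x. g (T x) = T' (g x)" by (metis comp_apply)
      then show "rel_mor sL sM (graph T) (graph T') g" using h unfolding rel_mor_def by simp
    qed
  next
    show "\<forall>T. module_hom sL sL T \<and> bij T \<longrightarrow>
        sharp (graph T) = UNIV \<and> flat (graph T) = {0} \<and>
        (\<forall>x. coset (graph T) x = {x}) \<and>
        (\<forall>x. theta (graph T) {x} = {T x})"
    proof (intro allI impI conjI)
      fix T assume h: "module_hom sL sL T \<and> bij T"
      then have T: "module_hom sL sL T" "bij T" by blast+
      show "sharp (graph T) = UNIV" using sharp_graph[OF T(2)] .
      show "flat (graph T) = {0}" using flat_graph[OF T] .
      fix x
      show "coset (graph T) x = {x}" using coset_graph[OF T] .
      have "theta (graph T) (coset (graph T) x) = coset (graph T) (T x)"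
        using theta_coset[OF mL graph_is_rel[OF T(1)]] sharp_graph[OF T(2)] by simp
      then show "theta (graph T) {x} = {T x}" using coset_graph[OF T] by simp
    qed
  next
    show "\<forall>T T' g. module_hom sL sL T \<and> bij T \<and> module_hom sM sM T' \<and> bij T' \<and>
        module_hom sL sM g \<and> g \<circ> T = T' \<circ> g \<longrightarrow>
        (\<forall>x. qmap (graph T) (graph T') g {x} = {g x})"
    proof (intro allI impI)
      fix T T' g x assume h: "module_hom sL sL T \<and> bij T \<and> module_hom sM sM T' \<and> bij T' \<and>
        module_hom sL sM g \<and> g \<circ> T = T' \<circ> g"
      then have T: "module_hom sL sL T" "bij T" and T': "module_hom sM sM T'" "bij T'" by blast+
      have "\<forall>x. g (T x) = T' (g x)" using h by (metis comp_apply)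
      then have gm: "rel_mor sL sM (graph T) (graph T') g" using h unfolding rel_mor_def by simp
      have "qmap (graph T) (graph T') g (coset (graph T) x) = coset (graph T') (g x)"
        using qmap_coset[OF mL mM graph_is_rel[OF T(1)] graph_is_rel[OF T'(1)] gm] sharp_graph[OF T(2)]
        by simp
      then show "qmap (graph T) (graph T') g {x} = {g x}" using coset_graph[OF T] coset_graph[OF T'] by simp
    qed
  qed
qed

end
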